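(* Let $k>2d_{\text{sp}}$ and let $\mu_1,\dots,\mu_k\in\mathbb{R}^{d_{\text{sp}}}$ be arbitrary fixed vectors. Then the set of tuples $(\Sigma_1,\dots,\Sigma_k)\in(\mathbb{S}^{d_{\text{sp}}}_{++})^k$ for which $\{\Sigma_i,\mu_i\}_{i=1}^k$ does not lie in general position has measure zero in $(\mathbb{S}^{d_{\text{sp}}}_{++})^k$.
   Context: $\mathbb{S}^d_{++}$ denotes the set of $d\times d$ symmetric positive definite matrices, an open subset of the space of symmetric matrices, and measure refers to Lebesgue measure on $(\mathbb{S}^{d_{\text{sp}}}_{++})^k$ viewed as an open subset of a Euclidean space. Given $k>2d_{\text{sp}}$ pairs $\{\Sigma_i,\mu_i\}_{i=1}^k$, they are in general position if for every nonzero ${\mathbf x}\in\mathbb{R}^{d_{\text{sp}}}$, the vectors $\begin{bmatrix}\Sigma_i{\mathbf x}+\mu_i\\ 1\end{bmatrix}\in\mathbb{R}^{d_{\text{sp}}+1}$, $i\in[k]$, span a subspace of dimension $d_{\text{sp}}+1$. *)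

theory Defs
  imports "HOL-Analysis.Analysis"
begin

definition sym_pos_def :: "real^'n^'n \<Rightarrow> bool" where
  "sym_pos_def A \<longleftrightarrow> transpose A = A \<and> (\<forall>x. x \<noteq> 0 \<longrightarrow> x \<bullet> (A *v x) > 0)"

definition ext1 :: "real^'n \<Rightarrow> real^('n option)" where
  "ext1 v = (\<chi> j. case j of None \<Rightarrow> 1 | Some a \<Rightarrow> v $ a)"

definition general_position :: "('k \<Rightarrow> real^'n^'n) \<Rightarrow> ('k \<Rightarrow> real^'n) \<Rightarrow> bool" where
  "general_position Sig mu \<longleftrightarrow>
     (\<forall>x::real^'n. x \<noteq> 0 \<longrightarrow>
        dim (span (range (\<lambda>i. ext1 (Sig i *v x + mu i)))) = CARD('n) + 1)"

text \<open>Coordinates of a k-tuple of symmetric matrices: the upper-triangular entries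
  (a \<le> b) of each matrix; Lebesgue measure on these coordinates is the product of
  Lebesgue measures indexed by this finite set.\<close>
definition sym_index :: "('k \<times> 'n::{finite,linorder} \<times> 'n) set" where
  "sym_index = {(i, a, b). a \<le> b}"

definition sym_space :: "('k \<times> 'n::{finite,linorder} \<times> 'n \<Rightarrow> real) measure" where
  "sym_space = PiM sym_index (\<lambda>_. lborel)"

definition mat_of_coords :: "('k \<times> 'n \<times> 'n \<Rightarrow> real) \<Rightarrow> 'k \<Rightarrow> ((real, 'n::{finite,linorder}) vec, 'n) vec" where
  "mat_of_coords c i = (\<chi> a b. c (i, min a b, max a b))"

end

theory Submission
  imports Defs
begin

typedef (overloaded) ('k, 'n) sidx = "sym_index :: ('k \<times> 'n::{finite,linorder} \<times> 'n) set"
  by (rule exI[of _ "(undefined, undefined, undefined)"]) (simp add: sym_index_def)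

instance sidx :: (finite, "{finite,linorder}") finite
proof
  have "(UNIV :: ('a,'b) sidx set) = Abs_sidx ` sym_index"
    using type_definition.Abs_image[OF type_definition_sidx] by auto
  then show "finite (UNIV :: ('a,'b) sidx set)" by (metis finite_imageI finite)
qed

definition psi :: "('k::finite \<times> 'n::{finite,linorder} \<times> 'n \<Rightarrow> real) \<Rightarrow> real^('k,'n) sidx" where
  "psi c = (\<chi> j. c (Rep_sidx j))"

lemma Rep_sidx_in: "Rep_sidx j \<in> sym_index"
  using Rep_sidx by blast

lemma psi_meas: "psi \<in> borel_measurable (sym_space :: ('k::finite \<times> 'n::{finite,linorder} \<times> 'n \<Rightarrow> real) measure)"
proof -
  have "psi = (\<lambda>c. \<Sum>j\<in>UNIV. c (Rep_sidx j) *\<^sub>R (axis j 1 :: real^('k,'n) sidx))"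
    by (auto simp: psi_def fun_eq_iff vec_eq_iff axis_def if_distrib cong: if_cong)
  moreover have "(\<lambda>c. \<Sum>j\<in>UNIV. c (Rep_sidx j) *\<^sub>R (axis j 1 :: real^('k,'n) sidx)) \<in> borel_measurable (sym_space :: ('k \<times> 'n \<times> 'n \<Rightarrow> real) measure)"
    unfolding sym_space_def
    by (intro borel_measurable_sum borel_measurable_scaleR borel_measurable_const)
      (metis measurable_component_singleton[OF Rep_sidx_in] measurable_lborel1)
  ultimately show ?thesis by simp
qed

lemma distr_psi: "distr (sym_space :: ('k::finite \<times> 'n::{finite,linorder} \<times> 'n \<Rightarrow> real) measure) borel psi = lborel"
proof (rule lborel_eqI[symmetric])
  interpret product_sigma_finite "\<lambda>_. lborel" by standard
  fix l u :: "real^('k,'n) sidx"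
  assume le: "\<And>b. b \<in> Basis \<Longrightarrow> l \<bullet> b \<le> u \<bullet> b"
  have fin: "finite (sym_index :: ('k \<times> 'n \<times> 'n) set)" by simp
  have "psi -` box l u \<inter> space sym_space = Pi\<^sub>E sym_index (\<lambda>p. {l $ Abs_sidx p <..< u $ Abs_sidx p})"
    apply (auto simp: sym_space_def space_PiM mem_box_cart psi_def PiE_iff Rep_sidx_in Abs_sidx_inverse)
    subgoal for x a aa b using Abs_sidx_inverse[of "(a,aa,b)"] by (metis (no_types))
    subgoal for x a aa b using Abs_sidx_inverse[of "(a,aa,b)"] by (metis (no_types))
    subgoal for x i using Rep_sidx_in[of i] Rep_sidx_inverse[of i] by (metis (no_types))
    subgoal for x i using Rep_sidx_in[of i] Rep_sidx_inverse[of i] by (metis (no_types))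
    done
  then have "emeasure (distr sym_space borel psi) (box l u) = (\<Prod>p\<in>sym_index. emeasure lborel {l $ Abs_sidx p <..< u $ Abs_sidx p})"
    using psi_meas by (subst emeasure_distr) (auto simp: sym_space_def emeasure_PiM)
  also have "\<dots> = (\<Prod>p\<in>sym_index. ennreal (u $ Abs_sidx p - l $ Abs_sidx p))"
  proof (rule prod.cong[OF refl])
    fix p :: "'k \<times> 'n \<times> 'n"
    have "l $ Abs_sidx p \<le> u $ Abs_sidx p"
      using le[of "axis (Abs_sidx p) 1"] by (auto simp: cart_eq_inner_axis Basis_vec_def)
    then show "emeasure lborel {l $ Abs_sidx p<..<u $ Abs_sidx p} = ennreal (u $ Abs_sidx p - l $ Abs_sidx p)"
      by simp
  qed
  also have "\<dots> = ennreal (\<Prod>p\<in>sym_index. (u $ Abs_sidx p - l $ Abs_sidx p))"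
    apply (rule prod_ennreal)
    using le by (auto simp: cart_eq_inner_axis Basis_vec_def)
  also have "(\<Prod>p\<in>sym_index. (u $ Abs_sidx p - l $ Abs_sidx p)) = (\<Prod>j\<in>UNIV. (u $ j - l $ j))"
  proof -
    have "bij_betw Abs_sidx (sym_index :: ('k \<times> 'n \<times> 'n) set) UNIV"
      by (rule bij_betwI[where g=Rep_sidx]) (auto simp: Abs_sidx_inverse Rep_sidx_inverse Rep_sidx_in)
    from prod.reindex_bij_betw[OF this, of "\<lambda>j. u $ j - l $ j"] show ?thesis by simp
  qed
  also have "\<dots> = (\<Prod>b\<in>Basis. (u - l) \<bullet> b)"
  proof -
    have B: "(Basis :: (real^('k,'n) sidx) set) = (\<lambda>j. axis j 1) ` UNIV"
      by (auto simp: Basis_vec_def)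
    have "inj (\<lambda>j. axis j (1::real) :: real^('k,'n) sidx)"
      by (auto simp: inj_def axis_eq_axis)
    then show ?thesis unfolding B
      by (subst prod.reindex) (auto simp: inner_axis' cart_eq_inner_axis[symmetric])
  qed
  finally show "emeasure (distr sym_space borel psi) (box l u) = (\<Prod>b\<in>Basis. (u - l) \<bullet> b)" .
qed simp


definition ent :: "real^('k::finite,'n::{finite,linorder}) sidx \<Rightarrow> 'k \<Rightarrow> 'n \<Rightarrow> 'n \<Rightarrow> real" where
  "ent u i p q = u $ Abs_sidx (i, min p q, max p q)"

definition Qf :: "real^('k::finite,'n::{finite,linorder}) sidx \<Rightarrow> 'k \<Rightarrow> (real,'n) vec \<Rightarrow> (real,'n) vec \<Rightarrow> real" where
  "Qf u i w x = (\<Sum>p\<in>UNIV. \<Sum>q\<in>UNIV. w$p * ent u i p q * x$q)"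

definition BadE :: "('k::finite \<Rightarrow> real^'n::{finite,linorder}) \<Rightarrow> (real^('k,'n) sidx) set" where
  "BadE mu = {u. \<exists>x w t. x \<noteq> 0 \<and> w \<noteq> 0 \<and> (\<forall>i. Qf u i w x + w \<bullet> mu i + t = 0)}"

lemma inner_ext1: "z \<bullet> ext1 v = z $ None + (\<chi> a. z $ Some a) \<bullet> v"
proof -
  have "z \<bullet> ext1 v = (\<Sum>j\<in>insert None (range Some). z $ j * ext1 v $ j)"
    by (simp add: inner_vec_def UNIV_option_conv)
  also have "\<dots> = z $ None + (\<Sum>j\<in>range Some. z $ j * ext1 v $ j)"
    by (subst sum.insert) (auto simp: ext1_def)
  also have "(\<Sum>j\<in>range Some. z $ j * ext1 v $ j) = (\<Sum>a\<in>UNIV. z $ Some a * v $ a)"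
    by (subst sum.reindex) (auto simp: ext1_def)
  finally show ?thesis by (simp add: inner_vec_def)
qed

lemma not_gp_BadE:
  fixes mu :: "'k::finite \<Rightarrow> real^'n::{finite,linorder}"
  assumes "\<not> general_position (mat_of_coords c) mu"
  shows "psi c \<in> BadE mu"
proof -
  obtain x where x: "x \<noteq> 0"
    and d: "dim (span (range (\<lambda>i. ext1 (mat_of_coords c i *v x + mu i)))) \<noteq> CARD('n) + 1"
    using assms unfolding general_position_def by blast
  let ?V = "range (\<lambda>i. ext1 (mat_of_coords c i *v x + mu i))"
  have "dim ?V \<le> CARD('n option)"
    by (rule dim_subset_UNIV_cart)
  with d have dlt: "dim ?V < DIM((real,'n option) vec)"
    by (simp)
  then obtain z where z: "z \<noteq> 0" and orth: "\<And>y. y \<in> span ?V \<Longrightarrow> orthogonal z y"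
    using orthogonal_to_subspace_exists[OF dlt] by blast
  define w where "w = (\<chi> a. z $ Some a)"
  define t where "t = z $ None"
  have eq: "w \<bullet> (mat_of_coords c i *v x + mu i) + t = 0" for i
    using orth[of "ext1 (mat_of_coords c i *v x + mu i)"]
    by (simp add: span_base orthogonal_def inner_ext1 w_def t_def add.commute)
  have w: "w \<noteq> 0"
  proof
    assume w0: "w = 0"
    then have "t = 0" using eq[of undefined] by simp
    then have "z = 0" using w0 unfolding w_def t_def
      by (auto simp: vec_eq_iff split: option.splits) (metis not_Some_eq)
    with z show False by simp
  qed
  have Q: "w \<bullet> (mat_of_coords c i *v x) = Qf (psi c) i w x" for i
  proof -
    have e: "ent (psi c) i p q = mat_of_coords c i $ p $ q" for p q
      using Abs_sidx_inverse[of "(i, min p q, max p q)"] unfolding sym_index_def by (simp add: ent_def psi_def mat_of_coords_def min_le_iff_disj)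
    show ?thesis
      by (simp add: Qf_def e inner_vec_def matrix_vector_mult_def sum_distrib_left mult_ac)
  qed
  show ?thesis unfolding BadE_def
    using x w eq Q by (auto simp: inner_add_right)
qed




definition slot :: "'n::{finite,linorder} \<Rightarrow> 'n \<Rightarrow> 'k::finite \<Rightarrow> ('k,'n) sidx" where
  "slot a b i = Abs_sidx (i, a, b)"

definition dl :: "'n::linorder \<Rightarrow> 'n \<Rightarrow> 'n \<Rightarrow> 'n \<Rightarrow> bool" where
  "dl a b p q \<longleftrightarrow> (min p q, max p q) = (a, b)"

definition Lf where
  "Lf a b v i w x = (\<Sum>p\<in>UNIV. \<Sum>q\<in>UNIV. if dl a b p q then 0 else w$p * ent v i p q * x$q)"

definition Cf where
  "Cf a b w x = (\<Sum>p\<in>UNIV. \<Sum>q\<in>UNIV. if dl a b p q then w$p * x$q else (0::real))"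

lemma Rep_slot: "a \<le> b \<Longrightarrow> Rep_sidx (slot a b i) = (i, a, b)"
  unfolding slot_def by (rule Abs_sidx_inverse) (simp add: sym_index_def)

lemma ent_dl: "a \<le> b \<Longrightarrow> dl a b p q \<Longrightarrow> ent v i p q = v $ slot a b i"
  by (simp add: ent_def dl_def slot_def)

lemma Qf_split:
  assumes "a \<le> b"
  shows "Qf u i w x = Lf a b u i w x + u $ slot a b i * Cf a b w x"
proof -
  have e: "w$p * ent u i p q * x$q = (if dl a b p q then 0 else w$p * ent u i p q * x$q)
          + u $ slot a b i * (if dl a b p q then w$p * x$q else 0)" for p q
    using ent_dl[OF assms, of p q u i] by auto
  have "Qf u i w x = (\<Sum>p\<in>UNIV. \<Sum>q\<in>UNIV. (if dl a b p q then 0 else w$p * ent u i p q * x$q)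
          + u $ slot a b i * (if dl a b p q then w$p * x$q else 0))"
    unfolding Qf_def by (intro sum.cong refl) (rule e)
  also have "\<dots> = Lf a b u i w x + u $ slot a b i * Cf a b w x"
    by (simp add: Lf_def Cf_def sum.distrib sum_distrib_left)
  finally show ?thesis .
qed

lemma Cf_closed:
  fixes w x :: "(real,'n::{finite,linorder}) vec"
  assumes "a \<le> b"
  shows "Cf a b w x = (if a = b then w$a * x$a else w$a * x$b + w$b * x$a)"
proof -
  have "Cf a b w x = (\<Sum>pq\<in>UNIV. if dl a b (fst pq) (snd pq) then w$(fst pq) * x$(snd pq) else 0)"
    unfolding Cf_def by (subst sum.cartesian_product) (simp add: case_prod_beta UNIV_Times_UNIV[symmetric] del: UNIV_Times_UNIV)
  also have "\<dots> = (\<Sum>pq\<in>{pq. dl a b (fst pq) (snd pq)}. w$(fst pq) * x$(snd pq))"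
    by (subst sum.inter_filter[symmetric]) auto
  also have "{pq. dl a b (fst pq) (snd pq)} = {(a,b),(b,a)}"
    using assms by (auto simp: dl_def min_def max_def split: if_splits)
  finally show ?thesis by auto
qed

lemma Cf_nonzero:
  fixes w x :: "(real,'n::{finite,linorder}) vec"
  assumes "w \<noteq> 0" "x \<noteq> 0"
  shows "\<exists>a b. a \<le> b \<and> Cf a b w x \<noteq> 0"
proof (rule ccontr)
  assume "\<not> ?thesis"
  then have Z: "\<And>a b. a \<le> b \<Longrightarrow> Cf a b w x = 0" by blast
  obtain c where c: "x $ c \<noteq> 0" using assms(2) by (auto simp: vec_eq_iff)
  have wc: "w $ c = 0" using Z[of c c] c by (simp add: Cf_closed)
  have "w $ d = 0" for d
  proof (cases "d = c")
    case False
    have "w$d * x$c + w$c * x$d = 0"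
    proof (cases "d \<le> c")
      case T: True then show ?thesis using Z[OF T] False by (simp add: Cf_closed)
    next
      case F: False
      then have cd: "c \<le> d" by simp
      show ?thesis using Z[OF cd] False Cf_closed[OF cd, of w x] by (simp add: algebra_simps)
    qed
    then show ?thesis using wc c by simp
  qed (use wc in simp)
  then have "w = 0" by (simp add: vec_eq_iff)
  with assms show False by simp
qed


definition Xv :: "('n::{finite,linorder} + 'n \<Rightarrow> 'k::finite) \<Rightarrow> 'n \<Rightarrow> 'n \<Rightarrow> real^('k,'n) sidx \<Rightarrow> (real,'n) vec" where
  "Xv e a b v = (\<chi> c. v $ slot a b (e (Inl c)))"

definition Wv :: "('n::{finite,linorder} + 'n \<Rightarrow> 'k::finite) \<Rightarrow> 'n \<Rightarrow> 'n \<Rightarrow> 'n \<Rightarrow> real^('k,'n) sidx \<Rightarrow> (real,'n) vec" where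
  "Wv e a0 a b v = (\<chi> c. if c = a0 then 1 else v $ slot a b (e (Inr c)))"

definition Tv :: "('n::{finite,linorder} + 'n \<Rightarrow> 'k::finite) \<Rightarrow> 'n \<Rightarrow> 'n \<Rightarrow> 'n \<Rightarrow> real^('k,'n) sidx \<Rightarrow> real" where
  "Tv e a0 a b v = v $ slot a b (e (Inr a0))"

definition Fm :: "('n::{finite,linorder} + 'n \<Rightarrow> 'k::finite) \<Rightarrow> ('k \<Rightarrow> (real,'n) vec) \<Rightarrow> 'n \<Rightarrow> 'n \<Rightarrow> 'n \<Rightarrow> real^('k,'n) sidx \<Rightarrow> real^('k,'n) sidx" where
  "Fm e mu a0 a b v = (\<chi> j. case Rep_sidx j of (i, p, q) \<Rightarrow>
     if (p, q) = (a, b) then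
       - (Lf a b v i (Wv e a0 a b v) (Xv e a b v) + Wv e a0 a b v \<bullet> mu i + Tv e a0 a b v) / Cf a b (Wv e a0 a b v) (Xv e a b v)
     else v $ j)"

definition Sm :: "('n::{finite,linorder} + 'n \<Rightarrow> 'k::finite) \<Rightarrow> 'k \<Rightarrow> 'n \<Rightarrow> 'n \<Rightarrow> 'n \<Rightarrow> (real^('k,'n) sidx) set" where
  "Sm e i0 a0 a b = {v. a \<le> b \<and> v $ slot a b i0 = 0 \<and> Cf a b (Wv e a0 a b v) (Xv e a b v) \<noteq> 0}"

lemma Sm_negligible: "negligible (Sm e i0 a0 a b)"
  by (rule negligible_subset[OF negligible_standard_hyperplane_cart[of "slot a b i0"]]) (auto simp: Sm_def)

lemma diff_if: "f differentiable F \<Longrightarrow> g differentiable F \<Longrightarrow> (\<lambda>v. if P then f v else g v) differentiable F"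
  by (cases P) auto

lemma diff_nth: "(\<lambda>v. v $ j) differentiable F"
  by (rule bounded_linear_imp_differentiable) (rule bounded_linear_vec_nth)

lemma diff_Xv: "(\<lambda>v. Xv e a b v $ c) differentiable F"
  by (simp add: Xv_def diff_nth)

lemma diff_Wv: "(\<lambda>v. Wv e a0 a b v $ c) differentiable F"
  by (simp add: Wv_def diff_nth diff_if)

lemma diff_ent: "(\<lambda>v. ent v i p q) differentiable F"
  by (simp add: ent_def diff_nth)

lemma diff_Lf: "(\<lambda>v. Lf a b v i (Wv e a0 a b v) (Xv e a b v)) differentiable (at z within S)"
  unfolding Lf_def
  by (intro differentiable_sum ballI finite diff_if differentiable_mult differentiable_const diff_Xv diff_Wv diff_ent)

lemma diff_Cf: "(\<lambda>v. Cf a b (Wv e a0 a b v) (Xv e a b v)) differentiable (at z within S)"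
  unfolding Cf_def
  by (intro differentiable_sum ballI finite diff_if differentiable_mult differentiable_const diff_Xv diff_Wv diff_ent)

lemma diff_inner: "(\<lambda>v. Wv e a0 a b v \<bullet> m) differentiable (at z within S)"
  unfolding inner_vec_def inner_real_def
  by (intro differentiable_sum ballI finite differentiable_mult differentiable_const diff_Wv)

lemma Fm_diff:
  fixes e :: "'n::{finite,linorder} + 'n \<Rightarrow> 'k::finite"
  shows "Fm e mu a0 a b differentiable_on Sm e i0 a0 a b"
  unfolding differentiable_on_def
proof
  fix z assume z: "z \<in> Sm e i0 a0 a b"
  show "Fm e mu a0 a b differentiable at z within Sm e i0 a0 a b"
  proof (subst differentiable_componentwise_within, intro ballI)
    fix \<beta> :: "(real, ('k,'n) sidx) vec" assume "\<beta> \<in> Basis"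
    then obtain j where \<beta>: "\<beta> = axis j 1" by (auto simp: Basis_vec_def)
    obtain i p q where r: "Rep_sidx j = (i, p, q)" by (metis prod_cases3)
    have "(\<lambda>v. Fm e mu a0 a b v $ j) differentiable at z within Sm e i0 a0 a b"
      unfolding Fm_def r vec_lambda_beta case_prod_conv
      using z
      by (intro diff_if differentiable_divide differentiable_minus differentiable_add diff_Lf diff_Cf diff_inner diff_nth)
        (auto simp: Sm_def Tv_def diff_nth)
    then show "(\<lambda>v. Fm e mu a0 a b v \<bullet> \<beta>) differentiable at z within Sm e i0 a0 a b"
      by (simp add: \<beta> cart_eq_inner_axis[symmetric])
  qed
qed


lemma cover:
  fixes e :: "'n::{finite,linorder} + 'n \<Rightarrow> 'k::finite" and mu :: "'k \<Rightarrow> (real,'n) vec"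
  assumes inj: "inj e" and i0: "i0 \<notin> range e"
  shows "BadE mu \<subseteq> (\<Union>(a0,a,b)\<in>UNIV. Fm e mu a0 a b ` Sm e i0 a0 a b)"
proof
  fix u assume "u \<in> BadE mu"
  then obtain x w t where x: "x \<noteq> 0" and w: "w \<noteq> 0" and eq: "\<And>i. Qf u i w x + w \<bullet> mu i + t = 0"
    unfolding BadE_def by blast
  obtain a0 where wa0: "w $ a0 \<noteq> 0" using w by (auto simp: vec_eq_iff)
  define w' where "w' = (1 / w $ a0) *\<^sub>R w"
  define t' where "t' = t / w $ a0"
  have eq': "Qf u i w' x + w' \<bullet> mu i + t' = 0" for i
  proof -
    have "Qf u i w' x = (1 / w $ a0) * Qf u i w x"
      by (simp add: Qf_def w'_def sum_distrib_left mult_ac)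
    then have "Qf u i w' x + w' \<bullet> mu i + t' = (1 / w $ a0) * (Qf u i w x + w \<bullet> mu i + t)"
      by (simp add: w'_def t'_def algebra_simps divide_inverse)
    then show ?thesis using eq[of i] by simp
  qed
  have w'a0: "w' $ a0 = 1" using wa0 by (simp add: w'_def)
  have w'0: "w' \<noteq> 0" using w'a0 by (metis zero_index zero_neq_one)
  obtain a b where ab: "a \<le> b" and cf: "Cf a b w' x \<noteq> 0"
    using Cf_nonzero[OF w'0 x] by blast
  define val where "val i = (if i \<in> range e then (case inv e i of Inl c \<Rightarrow> x$c | Inr c \<Rightarrow> if c = a0 then t' else w'$c) else 0)" for i
  define v where "v = (\<chi> j. case Rep_sidx j of (i,p,q) \<Rightarrow> if (p,q) = (a,b) then val i else u $ j)"
  have vs: "v $ slot a b i = val i" for i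
    by (simp add: v_def Rep_slot[OF ab])
  have vo: "ent v i p q = ent u i p q" if "\<not> dl a b p q" for i p q
  proof -
    have "Rep_sidx (Abs_sidx (i, min p q, max p q)) = (i, min p q, max p q)"
      by (rule Abs_sidx_inverse) (simp add: sym_index_def min_le_iff_disj)
    then show ?thesis using that by (auto simp: ent_def v_def dl_def)
  qed
  have X: "Xv e a b v = x"
    by (simp add: vec_eq_iff Xv_def vs val_def inv_f_f[OF inj])
  have W: "Wv e a0 a b v = w'"
    by (simp add: vec_eq_iff Wv_def vs val_def inv_f_f[OF inj] w'a0)
  have T: "Tv e a0 a b v = t'"
    by (simp add: Tv_def vs val_def inv_f_f[OF inj])
  have inS: "v \<in> Sm e i0 a0 a b"
    using ab cf i0 by (simp add: Sm_def X W vs val_def)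
  have L: "Lf a b v i w' x = Lf a b u i w' x" for i
    unfolding Lf_def by (intro sum.cong refl) (simp add: vo)
  have "Fm e mu a0 a b v = u"
  proof (subst vec_eq_iff, rule allI)
    fix j :: "('k,'n) sidx"
    obtain i p q where r: "Rep_sidx j = (i, p, q)" by (metis prod_cases3)
    show "Fm e mu a0 a b v $ j = u $ j"
    proof (cases "(p, q) = (a, b)")
      case True
      then have j: "j = slot a b i" using r unfolding slot_def
        by (metis Rep_sidx_inverse)
      have "Lf a b u i w' x + u $ j * Cf a b w' x + w' \<bullet> mu i + t' = 0"
        using eq'[of i] Qf_split[OF ab, of u i w' x] j by simp
      then show ?thesis using True r cf
        by (simp add: Fm_def X W T L field_simps)
    next
      case False
      have "v $ j = u $ j" using r False by (auto simp add: v_def)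
      then show ?thesis using r False by (auto simp add: Fm_def)
    qed
  qed
  then show "u \<in> (\<Union>(a0,a,b)\<in>UNIV. Fm e mu a0 a b ` Sm e i0 a0 a b)"
    using inS by blast
qed


lemma core:
  fixes mu :: "'k::finite \<Rightarrow> (real,'n::{finite,linorder}) vec"
  assumes "CARD('k) > 2 * CARD('n)"
  shows "negligible (BadE mu)"
proof -
  define i0 :: 'k where "i0 = undefined"
  have "card (UNIV :: ('n + 'n) set) \<le> card (UNIV - {i0})"
    using assms by (simp add: card_UNIV_sum)
  then obtain e :: "'n + 'n \<Rightarrow> 'k" where e: "e ` UNIV \<subseteq> UNIV - {i0}" and inj: "inj e"
    using card_le_inj[of "UNIV :: ('n + 'n) set" "UNIV - {i0}"] by auto
  have i0: "i0 \<notin> range e" using e by blast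
  have "negligible (\<Union>((\<lambda>(a0,a,b). Fm e mu a0 a b ` Sm e i0 a0 a b) ` UNIV))"
    by (rule negligible_Union) (auto intro!: negligible_differentiable_image_negligible Sm_negligible Fm_diff)
  then show ?thesis
    using cover[OF inj i0, of mu] negligible_subset by blast
qed


theorem lemmaS4:
  fixes mu :: "'k::finite \<Rightarrow> real^'n::{finite,linorder}"
  assumes "CARD('k) > 2 * CARD('n)"
  shows "\<exists>N \<in> null_sets (sym_space :: ('k \<times> 'n \<times> 'n \<Rightarrow> real) measure).
           {c \<in> space sym_space. (\<forall>i. sym_pos_def (mat_of_coords c i))
                \<and> \<not> general_position (mat_of_coords c) mu} \<subseteq> N"
proof -
  have "BadE mu \<in> null_sets lebesgue"
    using core[OF assms, of mu] by (simp only: negligible_iff_null_sets)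
  then obtain N' where N': "N' \<in> null_sets lborel" "BadE mu \<subseteq> N'"
    unfolding null_sets_completion_iff2 by blast
  define N where "N = psi -` N' \<inter> space (sym_space :: ('k \<times> 'n \<times> 'n \<Rightarrow> real) measure)"
  have Nsets: "N \<in> sets sym_space"
    unfolding N_def using psi_meas N'(1) by (intro measurable_sets[OF psi_meas]) auto
  have "emeasure sym_space N = emeasure (distr sym_space borel psi) N'"
    unfolding N_def using psi_meas N'(1) by (subst emeasure_distr) auto
  also have "\<dots> = 0" using N'(1) by (simp add: distr_psi null_sets_def)
  finally have "N \<in> null_sets sym_space" using Nsets by (simp add: null_sets_def)
  moreover have "{c \<in> space sym_space. (\<forall>i. sym_pos_def (mat_of_coords c i))
                \<and> \<not> general_position (mat_of_coords c) mu} \<subseteq> N"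
    using not_gp_BadE[of c mu for c] N'(2) unfolding N_def by blast
  ultimately show ?thesis by blast
qed

end
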